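(* Let $\mathcal F$ be a proper filter on $\omega$. The games $\mathfrak G_1(\mathcal F)$ and $\mathfrak G(\mathrm{Fr},[\omega]^{<\omega},\mathcal F)$ are equivalent: a player has a winning strategy in one game if and only if the same player has a winning strategy in the other. Consequently, in either game, player I has a winning strategy if and only if $\mathcal F$ is meager, and player II never has a winning strategy.
   Context: A filter on $\omega$ is a family $\mathcal F\subseteq\mathcal P(\omega)$ closed under finite intersections and supersets and containing all cofinite sets; it is proper if all its members are infinite. $\mathcal P(\omega)$ is identified with $2^\omega$ with the product topology; "meager" refers to this topology. $\mathrm{Fr}$ is the family of cofinite subsets of $\omega$. Game $\mathfrak G(\mathcal X,[\omega]^{<\omega},\mathcal Z)$: at each stage $k\in\omega$, player I chooses $X_k\in\mathcal X$ and player II responds with a nonempty finite set $s_k\subseteq X_k$; II wins if $\bigcup_k s_k\in\mathcal Z$, otherwise I wins. Game $\mathfrak G_1(\mathcal F)$: at each stage $k$, player I chooses $m_k\in\omega$ and player II responds with $n_k\in\omega$; II wins if $n_0<n_1<\cdots$, $m_k<n_k$ for infinitely many $k$, and $\{n_k:k\in\omega\}\in\mathcal F$; otherwise I wins. *)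

theory Defs
  imports "HOL-Analysis.Analysis"
begin

definition Fr :: "nat set set" where
  "Fr = {A. finite (- A)}"

definition is_filter :: "nat set set \<Rightarrow> bool" where
  "is_filter F \<longleftrightarrow>
     (\<forall>A\<in>F. \<forall>B\<in>F. A \<inter> B \<in> F) \<and>
     (\<forall>A\<in>F. \<forall>B. A \<subseteq> B \<longrightarrow> B \<in> F) \<and>
     Fr \<subseteq> F"

definition proper_filter :: "nat set set \<Rightarrow> bool" where
  "proper_filter F \<longleftrightarrow> is_filter F \<and> (\<forall>A\<in>F. infinite A)"

text \<open>Cantor space: product topology of discrete two-point spaces, carrier = all
  functions nat => bool.  A subset of P(omega) is identified with the set of its
  characteristic functions.\<close>

definition cantor_top :: "(nat \<Rightarrow> bool) topology" where
  "cantor_top = product_topology (\<lambda>_. discrete_topology (UNIV :: bool set)) UNIV"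

definition nowhere_dense_in :: "'a topology \<Rightarrow> 'a set \<Rightarrow> bool" where
  "nowhere_dense_in T A \<longleftrightarrow> A \<subseteq> topspace T \<and> T interior_of (T closure_of A) = {}"

definition meager_in :: "'a topology \<Rightarrow> 'a set \<Rightarrow> bool" where
  "meager_in T A \<longleftrightarrow> (\<exists>N :: nat \<Rightarrow> 'a set. (\<forall>k. nowhere_dense_in T (N k)) \<and> A \<subseteq> (\<Union>k. N k))"

definition char_set :: "nat set set \<Rightarrow> (nat \<Rightarrow> bool) set" where
  "char_set F = {f. {n. f n} \<in> F}"

definition meager_family :: "nat set set \<Rightarrow> bool" where
  "meager_family F \<longleftrightarrow> meager_in cantor_top (char_set F)"

text \<open>A strategy for player I maps the list of II's previous moves to I's next move;
  a strategy for player II maps the list of I's moves so far (including the current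
  one) to II's response.  (In a game of perfect information this is equivalent to
  strategies depending on the full history.)  A player making an illegal move loses.\<close>

definition G_legal_II :: "nat set \<Rightarrow> nat set \<Rightarrow> bool" where
  "G_legal_II X s \<longleftrightarrow> finite s \<and> s \<noteq> {} \<and> s \<subseteq> X"

definition G_winning_I :: "nat set set \<Rightarrow> nat set set \<Rightarrow> (nat set list \<Rightarrow> nat set) \<Rightarrow> bool" where
  "G_winning_I \<X> \<Z> \<sigma> \<longleftrightarrow>
     (\<forall>s :: nat \<Rightarrow> nat set.
        (\<forall>k. (\<forall>j<k. G_legal_II (\<sigma> (map s [0..<j])) (s j)) \<longrightarrow> \<sigma> (map s [0..<k]) \<in> \<X>) \<and>
        ((\<forall>k. G_legal_II (\<sigma> (map s [0..<k])) (s k)) \<longrightarrow> (\<Union>k. s k) \<notin> \<Z>))"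

definition G_winning_II :: "nat set set \<Rightarrow> nat set set \<Rightarrow> (nat set list \<Rightarrow> nat set) \<Rightarrow> bool" where
  "G_winning_II \<X> \<Z> \<tau> \<longleftrightarrow>
     (\<forall>X :: nat \<Rightarrow> nat set. (\<forall>k. X k \<in> \<X>) \<longrightarrow>
        (\<forall>k. G_legal_II (X k) (\<tau> (map X [0..<Suc k]))) \<and>
        (\<Union>k. \<tau> (map X [0..<Suc k])) \<in> \<Z>)"

definition I_wins_G :: "nat set set \<Rightarrow> nat set set \<Rightarrow> bool" where
  "I_wins_G \<X> \<Z> \<longleftrightarrow> (\<exists>\<sigma>. G_winning_I \<X> \<Z> \<sigma>)"

definition II_wins_G :: "nat set set \<Rightarrow> nat set set \<Rightarrow> bool" where
  "II_wins_G \<X> \<Z> \<longleftrightarrow> (\<exists>\<tau>. G_winning_II \<X> \<Z> \<tau>)"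

definition G1_II_wins_play :: "nat set set \<Rightarrow> (nat \<Rightarrow> nat) \<Rightarrow> (nat \<Rightarrow> nat) \<Rightarrow> bool" where
  "G1_II_wins_play F m n \<longleftrightarrow>
     strict_mono n \<and> (\<exists>\<^sub>\<infinity>k. m k < n k) \<and> range n \<in> F"

definition G1_winning_I :: "nat set set \<Rightarrow> (nat list \<Rightarrow> nat) \<Rightarrow> bool" where
  "G1_winning_I F \<sigma> \<longleftrightarrow>
     (\<forall>n :: nat \<Rightarrow> nat. \<not> G1_II_wins_play F (\<lambda>k. \<sigma> (map n [0..<k])) n)"

definition G1_winning_II :: "nat set set \<Rightarrow> (nat list \<Rightarrow> nat) \<Rightarrow> bool" where
  "G1_winning_II F \<tau> \<longleftrightarrow>
     (\<forall>m :: nat \<Rightarrow> nat. G1_II_wins_play F m (\<lambda>k. \<tau> (map m [0..<Suc k])))"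

definition I_wins_G1 :: "nat set set \<Rightarrow> bool" where
  "I_wins_G1 F \<longleftrightarrow> (\<exists>\<sigma>. G1_winning_I F \<sigma>)"

definition II_wins_G1 :: "nat set set \<Rightarrow> bool" where
  "II_wins_G1 F \<longleftrightarrow> (\<exists>\<tau>. G1_winning_II F \<tau>)"

end

theory Submission
  imports Defs "HOL-Library.Infinite_Set"
begin

definition cylf :: "(nat \<Rightarrow> bool) \<Rightarrow> nat \<Rightarrow> (nat \<Rightarrow> bool) set" where
  "cylf f b = {g. \<forall>i<b. g i = f i}"

lemma topspace_cantor [simp]: "topspace cantor_top = UNIV"
  unfolding cantor_top_def by (simp add: PiE_UNIV_domain)

lemma openin_cylf: "openin cantor_top (cylf f b)"
proof -
  define X where "X = (\<lambda>i. if i < b then {f i} else (UNIV::bool set))"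
  have "openin cantor_top (\<Pi>\<^sub>E i\<in>UNIV. X i)"
    unfolding cantor_top_def
  proof (rule product_topology_basis)
    show "finite {i. X i \<noteq> topspace (discrete_topology UNIV)}"
      by (rule finite_subset[of _ "{..<b}"]) (auto simp: X_def)
  qed (auto simp: X_def)
  moreover have "(\<Pi>\<^sub>E i\<in>UNIV. X i) = cylf f b"
    by (auto simp: X_def cylf_def PiE_iff split: if_splits)
  ultimately show ?thesis by simp
qed

lemma openin_cantor_cylf:
  assumes "openin cantor_top U" "f \<in> U"
  shows "\<exists>b. cylf f b \<subseteq> U"
proof -
  obtain X where X: "f \<in> (\<Pi>\<^sub>E i\<in>UNIV. X i)" "finite {i. X i \<noteq> topspace (discrete_topology (UNIV::bool set))}"
     "(\<Pi>\<^sub>E i\<in>UNIV. X i) \<subseteq> U"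
    using product_topology_open_contains_basis[OF assms[unfolded cantor_top_def]] by blast
  have fin: "finite {i. X i \<noteq> UNIV}" using X(2) by simp
  obtain b where b: "\<And>i. X i \<noteq> UNIV \<Longrightarrow> i < b"
    using finite_nat_bounded[OF fin] by auto
  have "cylf f b \<subseteq> (\<Pi>\<^sub>E i\<in>UNIV. X i)"
  proof
    fix g assume g: "g \<in> cylf f b"
    show "g \<in> (\<Pi>\<^sub>E i\<in>UNIV. X i)"
    proof (simp add: PiE_iff, intro allI)
      fix i show "g i \<in> X i"
      proof (cases "i < b")
        case True then show ?thesis using g X(1) by (auto simp: cylf_def PiE_iff)
      next
        case False then have "X i = UNIV" using b by (meson not_less)
        then show ?thesis by simp
      qed
    qed
  qed
  then show ?thesis using X(3) by blast
qed


definition Ivl :: "(nat \<Rightarrow> nat) \<Rightarrow> nat \<Rightarrow> nat set" where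
  "Ivl a j = {a j..<a (Suc j)}"

definition part :: "nat set set \<Rightarrow> (nat \<Rightarrow> nat) \<Rightarrow> bool" where
  "part F a \<longleftrightarrow> strict_mono a \<and> (\<forall>A\<in>F. finite {j. A \<inter> Ivl a j = {}})"

lemma filter_up: "is_filter F \<Longrightarrow> A \<in> F \<Longrightarrow> A \<subseteq> B \<Longrightarrow> B \<in> F"
  unfolding is_filter_def by blast

lemma filter_Int: "is_filter F \<Longrightarrow> A \<in> F \<Longrightarrow> B \<in> F \<Longrightarrow> A \<inter> B \<in> F"
  unfolding is_filter_def by blast

lemma filter_Fr: "is_filter F \<Longrightarrow> A \<in> Fr \<Longrightarrow> A \<in> F"
  unfolding is_filter_def by blast

lemma Fr_atLeast: "{c::nat..} \<in> Fr"
  unfolding Fr_def by (simp add: Compl_atLeast)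

lemma filter_tail: "is_filter F \<Longrightarrow> A \<in> F \<Longrightarrow> A \<inter> {c..} \<in> F"
  using filter_Int filter_Fr Fr_atLeast by blast

lemma part_meager:
  assumes "part F a"
  shows "meager_family F"
proof -
  have sm: "strict_mono a" and fin: "\<And>A. A \<in> F \<Longrightarrow> finite {j. A \<inter> Ivl a j = {}}"
    using assms unfolding part_def by auto
  define N where "N m = {f. \<forall>j\<ge>m. \<exists>i\<in>Ivl a j. f i}" for m
  have closed: "closedin cantor_top (N m)" for m
    unfolding closedin_def
  proof (intro conjI)
    show "N m \<subseteq> topspace cantor_top" by simp
    show "openin cantor_top (topspace cantor_top - N m)"
    proof (subst openin_subopen, intro ballI)
      fix g assume "g \<in> topspace cantor_top - N m"
      then obtain j where j: "j \<ge> m" "\<forall>i\<in>Ivl a j. \<not> g i" by (auto simp: N_def)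
      have "cylf g (a (Suc j)) \<subseteq> topspace cantor_top - N m"
      proof
        fix h assume h: "h \<in> cylf g (a (Suc j))"
        have "\<forall>i\<in>Ivl a j. \<not> h i"
          using h j(2) by (auto simp: cylf_def Ivl_def)
        then show "h \<in> topspace cantor_top - N m" using j(1) by (auto simp: N_def)
      qed
      moreover have "g \<in> cylf g (a (Suc j))" by (simp add: cylf_def)
      ultimately show "\<exists>T. openin cantor_top T \<and> g \<in> T \<and> T \<subseteq> topspace cantor_top - N m"
        using openin_cylf by blast
    qed
  qed
  have nd: "nowhere_dense_in cantor_top (N m)" for m
    unfolding nowhere_dense_in_def
  proof (intro conjI)
    show "N m \<subseteq> topspace cantor_top" by simp
    have "cantor_top interior_of N m = {}"
      unfolding interior_of_eq_empty
    proof (intro allI impI)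
      fix T assume T: "openin cantor_top T \<and> T \<subseteq> N m"
      show "T = {}"
      proof (rule ccontr)
        assume "T \<noteq> {}"
        then obtain f where f: "f \<in> T" by blast
        obtain b where b: "cylf f b \<subseteq> T" using openin_cantor_cylf T f by blast
        define j where "j = max m b"
        define h where "h = (\<lambda>i. i < b \<and> f i)"
        have "h \<in> cylf f b" by (simp add: h_def cylf_def)
        then have "h \<in> N m" using b T by blast
        moreover have "m \<le> j" by (simp add: j_def)
        ultimately obtain i where i: "i \<in> Ivl a j" "h i" unfolding N_def by blast
        have "j \<le> a j" using sm strict_mono_imp_increasing by blast
        then have "b \<le> i" using i(1) j_def by (auto simp: Ivl_def)
        then show False using i(2) h_def by simp
      qed
    qed
    then show "cantor_top interior_of (cantor_top closure_of N m) = {}"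
      using closed closure_of_closedin by metis
  qed
  have cov: "char_set F \<subseteq> (\<Union>m. N m)"
  proof
    fix f assume "f \<in> char_set F"
    then have A: "{n. f n} \<in> F" by (simp add: char_set_def)
    obtain m where m: "\<And>j. j \<in> {j. {n. f n} \<inter> Ivl a j = {}} \<Longrightarrow> j < m"
      using finite_nat_bounded[OF fin[OF A]] by auto
    have "f \<in> N m"
    proof (unfold N_def, intro CollectI allI impI)
      fix j assume "m \<le> j"
      then have "{n. f n} \<inter> Ivl a j \<noteq> {}" using m by (meson mem_Collect_eq not_less)
      then show "\<exists>i\<in>Ivl a j. f i" by blast
    qed
    then show "f \<in> (\<Union>m. N m)" by blast
  qed
  show ?thesis
    unfolding meager_family_def meager_in_def using nd cov by blast
qed

lemma nd_extend:
  assumes nd: "nowhere_dense_in cantor_top N"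
  shows "\<exists>b>a. \<exists>u\<subseteq>{a..<b}. cylf (\<lambda>i. i \<in> (S \<inter> {..<a}) \<union> u) b \<inter> N = {}"
proof -
  define f0 where "f0 = (\<lambda>i. i \<in> S \<inter> {..<a})"
  have int: "cantor_top interior_of (cantor_top closure_of N) = {}"
    using nd by (simp add: nowhere_dense_in_def)
  have "cylf f0 a \<noteq> {}" by (auto simp: cylf_def)
  then have "\<not> cylf f0 a \<subseteq> cantor_top closure_of N"
    using int openin_cylf unfolding interior_of_eq_empty by blast
  then obtain f where f: "f \<in> cylf f0 a" "f \<notin> cantor_top closure_of N" by blast
  have "openin cantor_top (topspace cantor_top - cantor_top closure_of N)"
    using closedin_closure_of closedin_def by blast
  then obtain b' where b': "cylf f b' \<subseteq> topspace cantor_top - cantor_top closure_of N"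
    using openin_cantor_cylf f(2) by fastforce
  define b where "b = max b' (Suc a)"
  define u where "u = {i. f i} \<inter> {a..<b}"
  have "b > a" by (simp add: b_def)
  moreover have "u \<subseteq> {a..<b}" by (simp add: u_def)
  moreover have "cylf (\<lambda>i. i \<in> (S \<inter> {..<a}) \<union> u) b \<inter> N = {}"
  proof (rule ccontr)
    assume "cylf (\<lambda>i. i \<in> (S \<inter> {..<a}) \<union> u) b \<inter> N \<noteq> {}"
    then obtain g where g: "g \<in> cylf (\<lambda>i. i \<in> (S \<inter> {..<a}) \<union> u) b" "g \<in> N" by blast
    have "g \<in> cylf f b'"
      unfolding cylf_def
    proof (intro CollectI allI impI)
      fix i assume "i < b'"
      then have ib: "i < b" by (simp add: b_def)
      then have gi: "g i = (i \<in> (S \<inter> {..<a}) \<union> u)" using g(1) by (simp add: cylf_def)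
      show "g i = f i"
      proof (cases "i < a")
        case True
        then have "f i = f0 i" using f(1) by (simp add: cylf_def)
        then show ?thesis using gi True by (simp add: f0_def u_def)
      next
        case False
        then show ?thesis using gi ib by (simp add: u_def)
      qed
    qed
    then have "g \<notin> cantor_top closure_of N" using b' by blast
    moreover have "g \<in> cantor_top closure_of N"
      using g(2) closure_of_subset[of N cantor_top] by auto
    ultimately show False by blast
  qed
  ultimately show ?thesis by blast
qed

lemma nd_extend_multi:
  assumes nd: "\<And>k. nowhere_dense_in cantor_top (N k)"
  assumes "finite P"
  shows "(\<forall>(t,k)\<in>P. t \<subseteq> {..<a}) \<Longrightarrow>
    \<exists>b>a. \<exists>u\<subseteq>{a..<b}. \<forall>(t,k)\<in>P. cylf (\<lambda>i. i \<in> t \<union> u) b \<inter> N k = {}"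
  using assms(2)
proof (induction P rule: finite_induct)
  case empty
  show ?case by (rule exI[of _ "Suc a"]) auto
next
  case (insert x P)
  obtain t k where x: "x = (t, k)" by (cases x)
  obtain b u where bu: "b > a" "u \<subseteq> {a..<b}" "\<forall>(t,k)\<in>P. cylf (\<lambda>i. i \<in> t \<union> u) b \<inter> N k = {}"
    using insert by auto
  have t: "t \<subseteq> {..<a}" using insert(4) x by auto
  obtain b' u' where bu': "b' > b" "u' \<subseteq> {b..<b'}"
    "cylf (\<lambda>i. i \<in> ((t \<union> u) \<inter> {..<b}) \<union> u') b' \<inter> N k = {}"
    using nd_extend[OF nd[of k], of b "t \<union> u"] by blast
  have tu: "(t \<union> u) \<inter> {..<b} = t \<union> u" using t bu(1,2) by auto
  show ?case
  proof (intro exI conjI)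
    show "b' > a" using bu bu' by simp
    show "u \<union> u' \<subseteq> {a..<b'}" using bu bu' by auto
    show "\<forall>(t', k')\<in>insert x P. cylf (\<lambda>i. i \<in> t' \<union> (u \<union> u')) b' \<inter> N k' = {}"
    proof (intro ballI)
      fix p assume tk: "p \<in> insert x P"
      obtain t' k' where p: "p = (t', k')" by (cases p)
      have "cylf (\<lambda>i. i \<in> t' \<union> (u \<union> u')) b' \<inter> N k' = {}"
      proof (rule equals0I)
        fix g assume g: "g \<in> cylf (\<lambda>i. i \<in> t' \<union> (u \<union> u')) b' \<inter> N k'"
        show False
        proof (cases "(t', k') = x")
          case True
          then have "t' = t" "k' = k" using x by auto
          then show ?thesis using g bu'(3) tu by (auto simp: Un_assoc)
        next
          case False
          then have P: "(t', k') \<in> P" using tk p by auto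
          have "g \<in> cylf (\<lambda>i. i \<in> t' \<union> u) b"
            using g bu'(1,2) by (auto simp: cylf_def)
          then show ?thesis using bu(3) P g by blast
        qed
      qed
      then show "case p of (t', k') \<Rightarrow> cylf (\<lambda>i. i \<in> t' \<union> (u \<union> u')) b' \<inter> N k' = {}"
        using p by simp
    qed
  qed
qed

definition stepb :: "(nat \<Rightarrow> (nat \<Rightarrow> bool) set) \<Rightarrow> nat \<Rightarrow> nat \<Rightarrow> nat \<times> nat set" where
  "stepb N a n = (SOME bu. fst bu > a \<and> snd bu \<subseteq> {a..<fst bu} \<and>
      (\<forall>t\<in>Pow {..<a}. \<forall>k\<le>n. cylf (\<lambda>i. i \<in> t \<union> snd bu) (fst bu) \<inter> N k = {}))"

primrec aseq :: "(nat \<Rightarrow> (nat \<Rightarrow> bool) set) \<Rightarrow> nat \<Rightarrow> nat" where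
  "aseq N 0 = 0"
| "aseq N (Suc n) = fst (stepb N (aseq N n) n)"

definition useq :: "(nat \<Rightarrow> (nat \<Rightarrow> bool) set) \<Rightarrow> nat \<Rightarrow> nat set" where
  "useq N n = snd (stepb N (aseq N n) n)"

lemma stepb_prop:
  assumes nd: "\<And>k. nowhere_dense_in cantor_top (N k)"
  shows "fst (stepb N a n) > a \<and> snd (stepb N a n) \<subseteq> {a..<fst (stepb N a n)} \<and>
      (\<forall>t\<in>Pow {..<a}. \<forall>k\<le>n. cylf (\<lambda>i. i \<in> t \<union> snd (stepb N a n)) (fst (stepb N a n)) \<inter> N k = {})"
proof -
  have fin: "finite (Pow {..<a} \<times> {..n})" by simp
  obtain b u where bu: "b > a" "u \<subseteq> {a..<b}"
    "\<forall>(t,k)\<in>Pow {..<a} \<times> {..n}. cylf (\<lambda>i. i \<in> t \<union> u) b \<inter> N k = {}"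
  proof -
    have "\<forall>(t,k)\<in>Pow {..<a} \<times> {..n}. t \<subseteq> {..<a}" by auto
    from nd_extend_multi[of N, OF nd fin, of a, OF this] show ?thesis using that by blast
  qed
  have "\<exists>bu. fst bu > a \<and> snd bu \<subseteq> {a..<fst bu} \<and>
      (\<forall>t\<in>Pow {..<a}. \<forall>k\<le>n. cylf (\<lambda>i. i \<in> t \<union> snd bu) (fst bu) \<inter> N k = {})"
    by (rule exI[of _ "(b,u)"]) (use bu in auto)
  then show ?thesis unfolding stepb_def by (rule someI_ex)
qed

lemma meager_part:
  assumes filt: "is_filter F" and mg: "meager_family F"
  shows "\<exists>a. part F a"
proof -
  have "\<exists>N :: nat \<Rightarrow> (nat \<Rightarrow> bool) set. (\<forall>k. nowhere_dense_in cantor_top (N k)) \<and> char_set F \<subseteq> (\<Union>k. N k)"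
    using mg unfolding meager_family_def meager_in_def .
  then obtain N :: "nat \<Rightarrow> (nat \<Rightarrow> bool) set" where nd: "\<And>k. nowhere_dense_in cantor_top (N k)" and cov: "char_set F \<subseteq> (\<Union>k. N k)"
    by blast
  define a where "a = aseq N"
  define U where "U = useq N"
  have P0: "a (Suc n) > a n \<and> U n \<subseteq> Ivl a n \<and>
     (\<forall>t\<in>Pow {..<a n}. \<forall>k\<le>n. cylf (\<lambda>i. i \<in> t \<union> U n) (a (Suc n)) \<inter> N k = {})" for n
    using stepb_prop[of N, OF nd, of "a n" n] unfolding a_def U_def useq_def Ivl_def aseq.simps(2) .
  have P: "a (Suc n) > a n" "U n \<subseteq> Ivl a n"
     "\<And>t k. t \<subseteq> {..<a n} \<Longrightarrow> k \<le> n \<Longrightarrow> cylf (\<lambda>i. i \<in> t \<union> U n) (a (Suc n)) \<inter> N k = {}" for n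
    using P0[of n] by blast+
  have sm: "strict_mono a" using P(1) by (simp add: strict_mono_Suc_iff)
  have "\<forall>A\<in>F. finite {j. A \<inter> Ivl a j = {}}"
  proof (rule ballI, rule ccontr)
    fix A assume A: "A \<in> F" and inf: "infinite {j. A \<inter> Ivl a j = {}}"
    define J where "J = {j. A \<inter> Ivl a j = {}}"
    define B where "B = A \<union> (\<Union>j\<in>J. U j)"
    have BF: "B \<in> F" using filter_up[OF filt A] B_def by blast
    have disj: "Ivl a j \<inter> Ivl a j' = {}" if "j \<noteq> j'" for j j'
    proof -
      { fix j j' :: nat assume "j < j'"
        then have "a (Suc j) \<le> a j'" using sm by (simp add: Suc_leI strict_mono_leD)
        then have "Ivl a j \<inter> Ivl a j' = {}" by (auto simp: Ivl_def) }
      then show ?thesis using that by (metis Int_commute linorder_neqE_nat)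
    qed
    have BI: "B \<inter> Ivl a j = U j" if "j \<in> J" for j
    proof -
      have "A \<inter> Ivl a j = {}" using that J_def by simp
      moreover have "U j' \<inter> Ivl a j = {}" if "j' \<noteq> j" for j'
        using P(2)[of j'] disj[OF that] by blast
      moreover have "(\<Union>j'\<in>J. U j') \<inter> Ivl a j = U j"
      proof
        show "(\<Union>j'\<in>J. U j') \<inter> Ivl a j \<subseteq> U j"
        proof
          fix x assume "x \<in> (\<Union>j'\<in>J. U j') \<inter> Ivl a j"
          then obtain j' where "j' \<in> J" "x \<in> U j'" "x \<in> Ivl a j" by blast
          then show "x \<in> U j" using \<open>\<And>j'. j' \<noteq> j \<Longrightarrow> U j' \<inter> Ivl a j = {}\<close>[of j'] by (cases "j' = j") auto
        qed
        show "U j \<subseteq> (\<Union>j'\<in>J. U j') \<inter> Ivl a j" using P(2)[of j] that by blast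
      qed
      ultimately show ?thesis unfolding B_def by blast
    qed
    have "(\<lambda>i. i \<in> B) \<notin> N k" for k
    proof -
      obtain j where j: "j \<in> J" "k \<le> j"
        using inf unfolding J_def[symmetric] by (meson infinite_nat_iff_unbounded_le)
      define t where "t = B \<inter> {..<a j}"
      have "(\<lambda>i. i \<in> B) \<in> cylf (\<lambda>i. i \<in> t \<union> U j) (a (Suc j))"
        unfolding cylf_def
      proof (intro CollectI allI impI)
        fix i assume i: "i < a (Suc j)"
        show "(i \<in> B) = (i \<in> t \<union> U j)"
        proof (cases "i < a j")
          case True
          then show ?thesis using P(2)[of j] by (auto simp: t_def Ivl_def)
        next
          case False
          then have "i \<in> Ivl a j" using i by (simp add: Ivl_def)
          then show ?thesis using BI[OF j(1)] by (auto simp: t_def)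
        qed
      qed
      then show ?thesis using P(3)[of t j k] j(2) by (auto simp: t_def)
    qed
    moreover have "(\<lambda>i. i \<in> B) \<in> char_set F" using BF by (simp add: char_set_def)
    ultimately show False using cov by blast
  qed
  then show ?thesis using sm unfolding part_def by blast
qed

lemma strict_mono_ge: "strict_mono (a::nat \<Rightarrow> nat) \<Longrightarrow> j \<le> a j"
  using strict_mono_imp_increasing by blast

lemma finite_bound_a:
  assumes "strict_mono (a::nat \<Rightarrow> nat)" "finite S"
  shows "\<exists>j. \<forall>x\<in>S. x < a j"
proof -
  obtain b where "\<forall>x\<in>S. x < b" using finite_nat_bounded[OF assms(2)] by auto
  moreover have "b \<le> a b" using strict_mono_ge[OF assms(1)] .
  ultimately show ?thesis by (meson order_less_le_trans)
qed

definition hG :: "(nat \<Rightarrow> nat) \<Rightarrow> nat set list \<Rightarrow> nat" where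
  "hG a l = (LEAST j. \<forall>x\<in>\<Union>(set l). x < a j)"

lemma part_I_wins_G:
  assumes "part F a"
  shows "I_wins_G Fr F"
proof -
  have sm: "strict_mono a" and fin: "\<And>A. A \<in> F \<Longrightarrow> finite {j. A \<inter> Ivl a j = {}}"
    using assms unfolding part_def by auto
  define \<sigma> where "\<sigma> l = {a (Suc (hG a l))..}" for l
  have "G_winning_I Fr F \<sigma>"
    unfolding G_winning_I_def
  proof (intro allI conjI impI)
    fix s :: "nat \<Rightarrow> nat set" and k
    show "\<sigma> (map s [0..<k]) \<in> Fr" by (simp add: \<sigma>_def Fr_atLeast)
  next
    fix s :: "nat \<Rightarrow> nat set"
    assume leg: "\<forall>k. G_legal_II (\<sigma> (map s [0..<k])) (s k)"
    define j where "j k = hG a (map s [0..<k])" for k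
    have sfin: "finite (s k)" "s k \<noteq> {}" "s k \<subseteq> {a (Suc (j k))..}" for k
      using leg unfolding G_legal_II_def \<sigma>_def j_def by auto
    have U: "\<Union>(set (map s [0..<k])) = (\<Union>i<k. s i)" for k by auto
    have jprop: "\<forall>x\<in>(\<Union>i<k. s i). x < a (j k)" for k
    proof -
      have "finite (\<Union>i<k. s i)" using sfin by auto
      then obtain j0 where "\<forall>x\<in>(\<Union>i<k. s i). x < a j0" using finite_bound_a[OF sm] by blast
      then show ?thesis unfolding j_def hG_def U by (rule LeastI)
    qed
    have jmono: "j k \<le> j k'" if "k \<le> k'" for k k'
    proof -
      have "\<forall>x\<in>(\<Union>i<k. s i). x < a (j k')" using jprop[of k'] that by auto
      then show ?thesis unfolding j_def hG_def U by (rule Least_le)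
    qed
    have jstep: "j k < j (Suc k)" for k
    proof -
      obtain x where x: "x \<in> s k" using sfin(2) by blast
      then have "a (Suc (j k)) \<le> x" using sfin(3) by auto
      moreover have "x < a (j (Suc k))" using jprop[of "Suc k"] x by auto
      ultimately have "a (Suc (j k)) < a (j (Suc k))" by simp
      then have "Suc (j k) < j (Suc k)" using sm strict_mono_less by blast
      then show ?thesis by simp
    qed
    then have smj: "strict_mono j" by (simp add: strict_mono_Suc_iff)
    have miss: "(\<Union>k. s k) \<inter> Ivl a (j k) = {}" for k
    proof (rule equals0I)
      fix x assume "x \<in> (\<Union>k. s k) \<inter> Ivl a (j k)"
      then obtain i where i: "x \<in> s i" and xI: "a (j k) \<le> x" "x < a (Suc (j k))" by (auto simp: Ivl_def)
      show False
      proof (cases "i < k")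
        case True
        then have "x < a (j k)" using jprop[of k] i by blast
        then show False using xI by simp
      next
        case False
        then have "j k \<le> j i" using jmono by simp
        then have "a (Suc (j k)) \<le> a (Suc (j i))" using sm by (simp add: strict_mono_less_eq)
        moreover have "a (Suc (j i)) \<le> x" using sfin(3)[of i] i by auto
        ultimately show False using xI by simp
      qed
    qed
    have "range j \<subseteq> {j'. (\<Union>k. s k) \<inter> Ivl a j' = {}}" using miss by auto
    moreover have "infinite (range j)"
      using smj by (simp add: strict_mono_imp_inj_on range_inj_infinite)
    ultimately have "infinite {j'. (\<Union>k. s k) \<inter> Ivl a j' = {}}" using finite_subset by blast
    then show "(\<Union>k. s k) \<notin> F" using fin by blast
  qed
  then show ?thesis unfolding I_wins_G_def by blast
qed


definition thr :: "nat set \<Rightarrow> nat" where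
  "thr X = (LEAST t. {t..} \<subseteq> X)"

lemma thr_sub: "X \<in> Fr \<Longrightarrow> {thr X..} \<subseteq> X"
proof -
  assume "X \<in> Fr"
  then have "finite (- X)" by (simp add: Fr_def)
  then obtain b where "- X \<subseteq> {..<b}" using finite_nat_bounded by blast
  have "{b..} \<subseteq> X"
  proof
    fix x assume x: "x \<in> {b..}"
    show "x \<in> X"
    proof (rule ccontr)
      assume "x \<notin> X"
      then have "x < b" using \<open>- X \<subseteq> {..<b}\<close> by auto
      then show False using x by simp
    qed
  qed
  then show ?thesis unfolding thr_def by (rule LeastI)
qed

definition PosG :: "nat \<Rightarrow> nat set list set" where
  "PosG b = {l. set l \<subseteq> Pow {..<b} \<and> length l \<le> b}"

lemma finite_PosG: "finite (PosG b)"
  unfolding PosG_def by (rule finite_lists_length_le) simp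

primrec aG :: "(nat set list \<Rightarrow> nat set) \<Rightarrow> nat \<Rightarrow> nat" where
  "aG \<sigma> 0 = 0"
| "aG \<sigma> (Suc j) = max (Suc (aG \<sigma> j)) (Max ((\<lambda>l. thr (\<sigma> l)) ` PosG (aG \<sigma> j)))"

lemma aG_bound:
  assumes "l \<in> PosG (aG \<sigma> j)" "\<sigma> l \<in> Fr"
  shows "{aG \<sigma> (Suc j)..} \<subseteq> \<sigma> l"
proof -
  have "thr (\<sigma> l) \<le> Max ((\<lambda>l. thr (\<sigma> l)) ` PosG (aG \<sigma> j))"
  proof (rule Max_ge)
    show "finite ((\<lambda>l. thr (\<sigma> l)) ` PosG (aG \<sigma> j))" by (rule finite_imageI[OF finite_PosG])
    show "thr (\<sigma> l) \<in> (\<lambda>l. thr (\<sigma> l)) ` PosG (aG \<sigma> j)" by (rule imageI[OF assms(1)])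
  qed
  then have "thr (\<sigma> l) \<le> aG \<sigma> (Suc j)" unfolding aG.simps(2) by (rule max.coboundedI2)
  then have "{aG \<sigma> (Suc j)..} \<subseteq> {thr (\<sigma> l)..}" by (rule atLeast_subset_iff[THEN iffD2])
  then show ?thesis using thr_sub[OF assms(2)] by (rule subset_trans)
qed

declare aG.simps(2)[simp del]

lemma I_wins_G_part:
  assumes pf: "proper_filter F" and win: "G_winning_I Fr F \<sigma>"
  shows "part F (aG \<sigma>)"
proof -
  have filt: "is_filter F" using pf by (simp add: proper_filter_def)
  define a where "a = aG \<sigma>"
  have "aG \<sigma> n < aG \<sigma> (Suc n)" for n
    unfolding aG.simps(2) by (rule max.strict_coboundedI1, rule lessI)
  then have sm: "strict_mono a" unfolding a_def strict_mono_Suc_iff by blast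
  have "\<forall>A\<in>F. finite {j. A \<inter> Ivl a j = {}}"
  proof (rule ballI, rule ccontr)
    fix A assume A: "A \<in> F" and inf: "infinite {j. A \<inter> Ivl a j = {}}"
    define J where "J = {j. A \<inter> Ivl a j = {}}"
    have infJ: "infinite J" using inf J_def by simp
    define g where "g k = enumerate J (2 * k)" for k
    have gJ: "g k \<in> J" for k unfolding g_def using enumerate_in_set[OF infJ] .
    have smg: "strict_mono g" unfolding g_def strict_mono_def using infJ by simp
    have gstep: "Suc (Suc (g k)) \<le> g (Suc k)" for k
    proof -
      have "enumerate J (2*k) < enumerate J (Suc (2*k))" "enumerate J (Suc (2*k)) < enumerate J (2 * Suc k)"
        using infJ by simp_all
      then show ?thesis unfolding g_def by simp
    qed
    define s where "s k = (A \<inter> {a (Suc (g k))..<a (g (Suc k))}) \<union> {a (g (Suc k)) - 1}" for k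
    have lt: "a (Suc (g k)) < a (g (Suc k))" for k
    proof -
      have "a (Suc (g k)) < a (Suc (Suc (g k)))" using sm by (simp add: strict_mono_less)
      also have "\<dots> \<le> a (g (Suc k))" using gstep[of k] sm by (simp add: strict_mono_less_eq)
      finally show ?thesis .
    qed
    have s_sub: "s k \<subseteq> {a (Suc (g k))..<a (g (Suc k))}" for k
      using lt[of k] unfolding s_def by auto
    have s_fin: "finite (s k)" "s k \<noteq> {}" for k unfolding s_def by auto
    have pos: "map s [0..<k] \<in> PosG (a (g k))" for k
    proof -
      have "s i \<subseteq> {..<a (g k)}" if "i < k" for i
      proof -
        have "g (Suc i) \<le> g k" using that smg by (simp add: strict_mono_less_eq)
        then have "a (g (Suc i)) \<le> a (g k)" using sm by (simp add: strict_mono_less_eq)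
        then show ?thesis using s_sub[of i] by auto
      qed
      moreover have "k \<le> a (g k)"
        using strict_mono_ge[OF smg, of k] strict_mono_ge[OF sm, of "g k"] by simp
      ultimately show ?thesis unfolding PosG_def by (auto simp: subset_iff)
    qed
    have legal: "G_legal_II (\<sigma> (map s [0..<k])) (s k)" for k
    proof (induction k rule: less_induct)
      case (less k)
      have "\<sigma> (map s [0..<k]) \<in> Fr" using win less unfolding G_winning_I_def by blast
      then have "{a (Suc (g k))..} \<subseteq> \<sigma> (map s [0..<k])"
        using aG_bound[of "map s [0..<k]" \<sigma> "g k"] pos[of k] unfolding a_def by simp
      moreover have "s k \<subseteq> {a (Suc (g k))..}" using s_sub[of k] by auto
      ultimately show ?case using s_fin unfolding G_legal_II_def by blast
    qed
    then have notF: "(\<Union>k. s k) \<notin> F" using win unfolding G_winning_I_def by blast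
    have "A \<inter> {a (Suc (g 0))..} \<subseteq> (\<Union>k. s k)"
    proof
      fix x assume x: "x \<in> A \<inter> {a (Suc (g 0))..}"
      have ex: "\<exists>k. x < a (Suc (g k))"
      proof -
        have "x < Suc x" by simp
        also have "Suc x \<le> g (Suc x)" using strict_mono_ge[OF smg] .
        also have "\<dots> \<le> a (g (Suc x))" using strict_mono_ge[OF sm] .
        also have "\<dots> < a (Suc (g (Suc x)))" using sm by (simp add: strict_mono_less)
        finally show ?thesis by blast
      qed
      define k where "k = (LEAST k. x < a (Suc (g k)))"
      have k1: "x < a (Suc (g k))" unfolding k_def using ex by (rule LeastI_ex)
      have "k \<noteq> 0"
      proof
        assume "k = 0"
        then show False using k1 x by simp
      qed
      then obtain k' where k': "k = Suc k'" using not0_implies_Suc by blast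
      have k2: "a (Suc (g k')) \<le> x"
        using not_less_Least[of k' "\<lambda>k. x < a (Suc (g k))"] k' unfolding k_def by auto
      have "x \<notin> Ivl a (g (Suc k'))" using gJ[of "Suc k'"] x unfolding J_def by auto
      then have "x < a (g (Suc k'))" using k1 k' by (auto simp: Ivl_def)
      then have "x \<in> s k'" using k2 x unfolding s_def by auto
      then show "x \<in> (\<Union>k. s k)" by blast
    qed
    moreover have "A \<inter> {a (Suc (g 0))..} \<in> F" using filter_tail[OF filt A] .
    ultimately have "(\<Union>k. s k) \<in> F" using filter_up[OF filt] by blast
    then show False using notF by simp
  qed
  then show ?thesis using sm unfolding part_def a_def by blast
qed

lemma II_legal_prefix:
  assumes win: "G_winning_II Fr Z \<tau>" and X: "\<forall>i<n. X i \<in> Fr" and k: "k < n"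
  shows "G_legal_II (X k) (\<tau> (map X [0..<Suc k]))"
proof -
  define X' where "X' i = (if i < n then X i else UNIV)" for i
  have "\<forall>i. X' i \<in> Fr" using X by (simp add: X'_def Fr_def)
  then have "G_legal_II (X' k) (\<tau> (map X' [0..<Suc k]))" using win unfolding G_winning_II_def by blast
  moreover have "map X' [0..<Suc k] = map X [0..<Suc k]" using k by (simp add: X'_def)
  moreover have "X' k = X k" using k by (simp add: X'_def)
  ultimately show ?thesis by metis
qed

primrec stG :: "(nat set list \<Rightarrow> nat set) \<Rightarrow> nat \<Rightarrow> nat set list \<times> nat set list \<times> nat set" where
  "stG \<tau> 0 = ([], [], {})"
| "stG \<tau> (Suc k) = (case stG \<tau> k of (LA, LB, U) \<Rightarrow>
     (LA @ [- U], LB @ [- (U \<union> \<tau> (LA @ [- U]))],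
      U \<union> \<tau> (LA @ [- U]) \<union> \<tau> (LB @ [- (U \<union> \<tau> (LA @ [- U]))])))"

lemma no_II_wins_G:
  assumes pf: "proper_filter F"
  shows "\<not> II_wins_G Fr F"
proof
  assume "II_wins_G Fr F"
  then obtain \<tau> where win: "G_winning_II Fr F \<tau>" unfolding II_wins_G_def by blast
  have filt: "is_filter F" and inf: "\<And>A. A \<in> F \<Longrightarrow> infinite A" using pf by (auto simp: proper_filter_def)
  define UU where "UU k = snd (snd (stG \<tau> k))" for k
  define XA where "XA k = - UU k" for k
  define sA where "sA k = \<tau> (map XA [0..<Suc k])" for k
  define XB where "XB k = - (UU k \<union> sA k)" for k
  define sB where "sB k = \<tau> (map XB [0..<Suc k])" for k
  have st: "fst (stG \<tau> k) = map XA [0..<k] \<and> fst (snd (stG \<tau> k)) = map XB [0..<k]" for k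
  proof (induction k)
    case 0 then show ?case by simp
  next
    case (Suc k)
    obtain LA LB U where e: "stG \<tau> k = (LA, LB, U)" by (cases "stG \<tau> k") auto
    have U: "U = UU k" using e by (simp add: UU_def)
    have LA: "LA = map XA [0..<k]" "LB = map XB [0..<k]" using Suc e by auto
    have "map XA [0..<Suc k] = LA @ [- U]" using LA U by (simp add: XA_def)
    moreover have "map XB [0..<Suc k] = LB @ [- (U \<union> \<tau> (LA @ [- U]))]"
      using LA U calculation by (simp add: XB_def sA_def)
    ultimately show ?case using e by simp
  qed
  have UUs: "UU (Suc k) = UU k \<union> sA k \<union> sB k" for k
  proof -
    obtain LA LB U where e: "stG \<tau> k = (LA, LB, U)" by (cases "stG \<tau> k") auto
    have U: "U = UU k" using e by (simp add: UU_def)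
    have LA: "LA = map XA [0..<k]" "LB = map XB [0..<k]" using st[of k] e by auto
    have A: "map XA [0..<Suc k] = LA @ [- U]" using LA U by (simp add: XA_def)
    have B: "map XB [0..<Suc k] = LB @ [- (U \<union> \<tau> (LA @ [- U]))]"
      using LA U A by (simp add: XB_def sA_def)
    have "UU (Suc k) = U \<union> \<tau> (LA @ [- U]) \<union> \<tau> (LB @ [- (U \<union> \<tau> (LA @ [- U]))])"
      by (simp add: UU_def e)
    moreover have "sA k = \<tau> (LA @ [- U])" unfolding sA_def A ..
    moreover have "sB k = \<tau> (LB @ [- (U \<union> \<tau> (LA @ [- U]))])" unfolding sB_def B ..
    ultimately show ?thesis using U by simp
  qed
  have mono: "UU i \<subseteq> UU k" if "i \<le> k" for i k
    using that
  proof (induction k)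
    case 0 then show ?case by simp
  next
    case (Suc k)
    then show ?case using UUs[of k] by (cases "i = Suc k") auto
  qed
  have sAU: "sA k \<subseteq> UU (Suc k)" "sB k \<subseteq> UU (Suc k)" for k using UUs[of k] by auto
  have finU: "finite (UU k)" for k
  proof (induction k)
    case 0 then show ?case by (simp add: UU_def)
  next
    case (Suc k)
    have finUi: "finite (UU i)" if "i \<le> k" for i using mono[OF that] Suc finite_subset by blast
    have XAF: "\<forall>i<Suc k. XA i \<in> Fr" using finUi by (simp add: XA_def Fr_def)
    have finsA: "finite (sA i)" if "i \<le> k" for i
      using II_legal_prefix[OF win XAF, of i] that unfolding G_legal_II_def sA_def by simp
    have XBF: "\<forall>i<Suc k. XB i \<in> Fr" using finUi finsA by (simp add: XB_def Fr_def)
    have "finite (sB k)"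
      using II_legal_prefix[OF win XBF, of k] unfolding G_legal_II_def sB_def by simp
    then show ?case using UUs[of k] Suc finsA[of k] by simp
  qed
  have XAF: "\<forall>k. XA k \<in> Fr" using finU by (simp add: XA_def Fr_def)
  then have winA: "(\<forall>k. G_legal_II (XA k) (sA k)) \<and> (\<Union>k. sA k) \<in> F"
    using win unfolding G_winning_II_def sA_def by blast
  have "finite (sA k)" for k using winA unfolding G_legal_II_def by blast
  then have XBF: "\<forall>k. XB k \<in> Fr" using finU by (simp add: XB_def Fr_def)
  then have winB: "(\<forall>k. G_legal_II (XB k) (sB k)) \<and> (\<Union>k. sB k) \<in> F"
    using win unfolding G_winning_II_def sB_def by blast
  have sAX: "sA k \<subseteq> - UU k" for k using winA unfolding G_legal_II_def XA_def by blast
  have sBX: "sB k \<subseteq> - (UU k \<union> sA k)" for k using winB unfolding G_legal_II_def XB_def by blast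
  have disj: "(\<Union>k. sA k) \<inter> (\<Union>k. sB k) = {}"
  proof (rule equals0I)
    fix x assume "x \<in> (\<Union>k. sA k) \<inter> (\<Union>k. sB k)"
    then obtain i j where x: "x \<in> sA i" "x \<in> sB j" by blast
    consider "i < j" | "i = j" | "j < i" by linarith
    then show False
    proof cases
      case 1
      then have "x \<in> UU j" using sAU(1)[of i] mono[of "Suc i" j] x(1) by auto
      then show False using sBX[of j] x(2) by blast
    next
      case 2
      then show False using sBX[of j] x by blast
    next
      case 3
      then have "x \<in> UU i" using sAU(2)[of j] mono[of "Suc j" i] x(2) by auto
      then show False using sAX[of i] x(1) by blast
    qed
  qed
  have "(\<Union>k. sA k) \<inter> (\<Union>k. sB k) \<in> F" using filter_Int[OF filt] winA winB by blast
  then show False using inf disj by fastforce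
qed

definition h1 :: "(nat \<Rightarrow> nat) \<Rightarrow> nat list \<Rightarrow> nat" where
  "h1 a l = (LEAST j. \<forall>x\<in>set l. x < a j)"

lemma part_I_wins_G1:
  assumes "part F a"
  shows "I_wins_G1 F"
proof -
  have sm: "strict_mono a" and fin: "\<And>A. A \<in> F \<Longrightarrow> finite {j. A \<inter> Ivl a j = {}}"
    using assms unfolding part_def by auto
  define \<sigma> where "\<sigma> l = a (Suc (h1 a l))" for l
  have "G1_winning_I F \<sigma>"
    unfolding G1_winning_I_def
  proof (intro allI notI)
    fix n :: "nat \<Rightarrow> nat"
    assume "G1_II_wins_play F (\<lambda>k. \<sigma> (map n [0..<k])) n"
    then have smn: "strict_mono n" and infK: "infinite {k. \<sigma> (map n [0..<k]) < n k}" and R: "range n \<in> F"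
      unfolding G1_II_wins_play_def by (auto simp: INFM_iff_infinite)
    define K where "K = {k. \<sigma> (map n [0..<k]) < n k}"
    define jj where "jj k = h1 a (map n [0..<k])" for k
    have jjprop: "\<forall>x\<in>set (map n [0..<k]). x < a (jj k)" for k
    proof -
      obtain j0 where "\<forall>x\<in>set (map n [0..<k]). x < a j0" using finite_bound_a[OF sm, of "set (map n [0..<k])"] by blast
      then show ?thesis unfolding jj_def h1_def by (rule LeastI)
    qed
    have jjK: "n k > a (Suc (jj k))" if "k \<in> K" for k using that unfolding K_def \<sigma>_def jj_def by simp
    have miss: "range n \<inter> Ivl a (jj k) = {}" if k: "k \<in> K" for k
    proof (rule equals0I)
      fix x assume "x \<in> range n \<inter> Ivl a (jj k)"
      then obtain i where x: "x = n i" "a (jj k) \<le> x" "x < a (Suc (jj k))" by (auto simp: Ivl_def)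
      show False
      proof (cases "i < k")
        case True
        then have "n i < a (jj k)" using jjprop[of k] by auto
        then show False using x by simp
      next
        case False
        then have "n k \<le> n i" using smn by (simp add: strict_mono_less_eq)
        then show False using jjK[OF k] x by simp
      qed
    qed
    have "inj_on jj K"
    proof (rule inj_onI)
      fix k k' assume kk: "k \<in> K" "k' \<in> K" "jj k = jj k'"
      show "k = k'"
      proof (rule ccontr)
        assume "k \<noteq> k'"
        then consider "k < k'" | "k' < k" by linarith
        then show False
        proof cases
          case 1
          then have "n k < a (jj k')" using jjprop[of k'] by auto
          moreover have "a (jj k) < a (Suc (jj k))" using sm by (simp add: strict_mono_less)
          ultimately show False using jjK[OF kk(1)] kk(3) by simp
        next
          case 2
          then have "n k' < a (jj k)" using jjprop[of k] by auto
          moreover have "a (jj k') < a (Suc (jj k'))" using sm by (simp add: strict_mono_less)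
          ultimately show False using jjK[OF kk(2)] kk(3) by simp
        qed
      qed
    qed
    moreover have "infinite K" using infK unfolding K_def .
    ultimately have "infinite (jj ` K)" using finite_imageD by blast
    moreover have "jj ` K \<subseteq> {j. range n \<inter> Ivl a j = {}}" using miss by auto
    ultimately have "infinite {j. range n \<inter> Ivl a j = {}}" using finite_subset by blast
    then show False using fin[OF R] by simp
  qed
  then show ?thesis unfolding I_wins_G1_def by blast
qed

definition Pos1 :: "nat \<Rightarrow> nat list set" where
  "Pos1 b = {l. set l \<subseteq> {..<b} \<and> length l \<le> b}"

lemma finite_Pos1: "finite (Pos1 b)"
  unfolding Pos1_def by (rule finite_lists_length_le) simp

primrec aG1 :: "(nat list \<Rightarrow> nat) \<Rightarrow> nat \<Rightarrow> nat" where
  "aG1 \<sigma> 0 = 0"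
| "aG1 \<sigma> (Suc j) = max (Suc (aG1 \<sigma> j)) (Max (\<sigma> ` Pos1 (aG1 \<sigma> j)) + 2)"

lemma aG1_bound:
  assumes "l \<in> Pos1 (aG1 \<sigma> j)"
  shows "\<sigma> l + 2 \<le> aG1 \<sigma> (Suc j)"
proof -
  have "\<sigma> l \<le> Max (\<sigma> ` Pos1 (aG1 \<sigma> j))"
  proof (rule Max_ge)
    show "finite (\<sigma> ` Pos1 (aG1 \<sigma> j))" by (rule finite_imageI[OF finite_Pos1])
    show "\<sigma> l \<in> \<sigma> ` Pos1 (aG1 \<sigma> j)" by (rule imageI[OF assms(1)])
  qed
  then have "\<sigma> l + 2 \<le> Max (\<sigma> ` Pos1 (aG1 \<sigma> j)) + 2" by simp
  then show ?thesis unfolding aG1.simps(2) by (rule max.coboundedI2)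
qed

declare aG1.simps(2)[simp del]

lemma I_wins_G1_part:
  assumes pf: "proper_filter F" and win: "G1_winning_I F \<sigma>"
  shows "part F (aG1 \<sigma>)"
proof -
  have filt: "is_filter F" and infF: "\<And>A. A \<in> F \<Longrightarrow> infinite A" using pf by (auto simp: proper_filter_def)
  define a where "a = aG1 \<sigma>"
  have "aG1 \<sigma> n < aG1 \<sigma> (Suc n)" for n
    unfolding aG1.simps(2) by (rule max.strict_coboundedI1, rule lessI)
  then have sm: "strict_mono a" unfolding a_def strict_mono_Suc_iff by blast
  have "\<forall>A\<in>F. finite {j. A \<inter> Ivl a j = {}}"
  proof (rule ballI, rule ccontr)
    fix A assume A: "A \<in> F" and inf: "infinite {j. A \<inter> Ivl a j = {}}"
    define J where "J = {j. A \<inter> Ivl a j = {}}"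
    have infJ: "infinite J" using inf J_def by simp
    define v where "v j = a (Suc j) - 1" for j
    define R where "R = A \<union> v ` J"
    have infR: "infinite R" using infF[OF A] R_def by auto
    define n where "n = enumerate R"
    have smn: "strict_mono n" unfolding n_def using strict_mono_enumerate[OF infR] .
    have rn: "range n = R" unfolding n_def using range_enumerate[OF infR] .
    have RF: "range n \<in> F" using rn R_def filter_up[OF filt A] by blast
    have vI: "a j \<le> v j" "v j < a (Suc j)" for j
    proof -
      have "a j < a (Suc j)" using sm by (simp add: strict_mono_less)
      then show "a j \<le> v j" "v j < a (Suc j)" unfolding v_def by simp_all
    qed
    have key: "\<sigma> (map n [0..<k]) < n k" if j: "j \<in> J" and k: "n k = v j" for j k
    proof -
      have below: "n i < a j" if i: "i < k" for i
      proof -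
        have lt: "n i < v j" using smn i k by (metis strict_mono_less)
        have "n i \<in> R" using rn by blast
        then consider "n i \<in> A" | j' where "j' \<in> J" "n i = v j'" unfolding R_def by blast
        then show ?thesis
        proof cases
          case 1
          then have "n i \<notin> Ivl a j" using j unfolding J_def by blast
          then show ?thesis using lt vI[of j] by (auto simp: Ivl_def)
        next
          case 2
          consider "j' < j" | "j' = j" | "j < j'" by linarith
          then show ?thesis
          proof cases
            case 1
            then have "a (Suc j') \<le> a j" using sm by (simp add: strict_mono_less_eq Suc_le_eq)
            then show ?thesis using vI[of j'] 2 by simp
          next
            case 2
            then show ?thesis using lt \<open>n i = v j'\<close> by simp
          next
            case 3
            then have "a (Suc j) \<le> a j'" using sm by (simp add: strict_mono_less_eq Suc_le_eq)
            then show ?thesis using vI[of j'] vI[of j] lt \<open>n i = v j'\<close> by simp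
          qed
        qed
      qed
      have len: "k \<le> a j"
      proof (cases k)
        case 0 then show ?thesis by simp
      next
        case (Suc k')
        have "k' \<le> n k'" using strict_mono_ge[OF smn] .
        moreover have "n k' < a j" using below Suc by simp
        ultimately show ?thesis using Suc by simp
      qed
      have "map n [0..<k] \<in> Pos1 (a j)" using below len unfolding Pos1_def by auto
      then have "\<sigma> (map n [0..<k]) + 2 \<le> a (Suc j)" using aG1_bound unfolding a_def by blast
      then show ?thesis using k unfolding v_def by simp
    qed
    have "infinite {k. \<sigma> (map n [0..<k]) < n k}"
    proof
      assume "finite {k. \<sigma> (map n [0..<k]) < n k}"
      then obtain B where "{k. \<sigma> (map n [0..<k]) < n k} \<subseteq> {..<B}"
        using finite_nat_bounded by presburger
      then have B: "\<And>k. \<sigma> (map n [0..<k]) < n k \<Longrightarrow> k < B" by auto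
      obtain j where j: "j \<in> J" "n B < j" using infJ unfolding infinite_nat_iff_unbounded by blast
      have "v j \<in> range n" using rn R_def j by blast
      then obtain k where k: "n k = v j" by auto
      have "j \<le> a j" using strict_mono_ge[OF sm] .
      then have "n B < n k" using k vI[of j] j by simp
      then have "B < k" using smn strict_mono_less by blast
      moreover have "k < B" using B key[OF j(1) k] by blast
      ultimately show False by simp
    qed
    then have "G1_II_wins_play F (\<lambda>k. \<sigma> (map n [0..<k])) n"
      unfolding G1_II_wins_play_def using smn RF by (simp add: INFM_iff_infinite)
    then show False using win unfolding G1_winning_I_def by blast
  qed
  then show ?thesis using sm unfolding part_def a_def by blast
qed

locale IIG1 =
  fixes F :: "nat set set" and \<tau> :: "nat list \<Rightarrow> nat"
  assumes win: "G1_winning_II F \<tau>"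
begin

definition ext :: "nat list \<Rightarrow> nat \<Rightarrow> nat" where
  "ext p i = (if i < length p then p ! i else 0)"

lemma map_ext: "k \<le> length p \<Longrightarrow> map (ext p) [0..<k] = take k p"
  by (rule nth_equalityI) (auto simp: ext_def)

lemma win_mono:
  assumes "i < j" "j < length p"
  shows "\<tau> (take (Suc i) p) < \<tau> (take (Suc j) p)"
proof -
  have "strict_mono (\<lambda>k. \<tau> (map (ext p) [0..<Suc k]))"
    using win unfolding G1_winning_II_def G1_II_wins_play_def by blast
  from strict_monoD[OF this assms(1)]
  have "\<tau> (map (ext p) [0..<Suc i]) < \<tau> (map (ext p) [0..<Suc j])" by (simp only:)
  then show ?thesis using assms by (simp only: map_ext)
qed

definition Vs :: "nat list \<Rightarrow> nat set" where
  "Vs p = (\<lambda>i. \<tau> (take (Suc i) p)) ` {..<length p}"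

definition lastv :: "nat list \<Rightarrow> nat" where
  "lastv p = (if p = [] then 0 else \<tau> p)"

lemma finite_Vs: "finite (Vs p)" unfolding Vs_def by simp

lemma Vs_max: "x \<in> Vs p \<Longrightarrow> x \<le> lastv p"
proof -
  assume "x \<in> Vs p"
  then obtain i where i: "i < length p" "x = \<tau> (take (Suc i) p)" unfolding Vs_def by blast
  then have ne: "p \<noteq> []" by auto
  show ?thesis
  proof (cases "Suc i = length p")
    case True then show ?thesis using i ne by (simp add: lastv_def)
  next
    case False
    then have "\<tau> (take (Suc i) p) < \<tau> (take (Suc (length p - 1)) p)"
      using i by (intro win_mono) auto
    then show ?thesis using i ne by (simp add: lastv_def)
  qed
qed

lemma last_in_Vs: "p \<noteq> [] \<Longrightarrow> \<tau> p \<in> Vs p"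
  unfolding Vs_def by (rule image_eqI[of _ _ "length p - 1"]) auto

lemma Vs_app_sub: "Vs p \<subseteq> Vs (p @ w)"
proof
  fix x assume "x \<in> Vs p"
  then obtain i where i: "i < length p" "x = \<tau> (take (Suc i) p)" unfolding Vs_def by blast
  then have "x = \<tau> (take (Suc i) (p @ w))" by simp
  moreover have "i \<in> {..<length (p @ w)}" using i by simp
  ultimately show "x \<in> Vs (p @ w)" unfolding Vs_def by (rule image_eqI)
qed

lemma Vs_new:
  assumes y: "y \<in> Vs p" and x: "x \<in> Vs (p @ w)" "x \<notin> Vs p"
  shows "y < x"
proof -
  obtain i where i: "i < length p" "y = \<tau> (take (Suc i) p)" using y unfolding Vs_def by blast
  obtain j where j: "j < length (p @ w)" "x = \<tau> (take (Suc j) (p @ w))" using x unfolding Vs_def by blast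
  have "\<not> j < length p"
  proof
    assume "j < length p"
    then have "x = \<tau> (take (Suc j) p)" using j by simp
    then show False using x(2) \<open>j < length p\<close> unfolding Vs_def by auto
  qed
  then have "i < j" using i by simp
  then have "\<tau> (take (Suc i) (p @ w)) < \<tau> (take (Suc j) (p @ w))" using j by (intro win_mono) auto
  then show ?thesis using i j by simp
qed

lemma Vs_snoc: "Vs (p @ [m]) = Vs p \<union> {\<tau> (p @ [m])}"
proof -
  have "{..<length (p @ [m])} = insert (length p) {..<length p}" by auto
  then show ?thesis unfolding Vs_def by auto
qed

definition unb :: "nat list \<Rightarrow> bool" where
  "unb p \<longleftrightarrow> (\<forall>K. \<exists>m. K < \<tau> (p @ [m]))"

definition bet :: "nat list \<Rightarrow> nat" where
  "bet p = (SOME K. \<forall>m. \<tau> (p @ [m]) \<le> K)"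

lemma bet_prop: "\<not> unb p \<Longrightarrow> \<tau> (p @ [m]) \<le> bet p"
proof -
  assume "\<not> unb p"
  then have "\<exists>K. \<forall>m. \<tau> (p @ [m]) \<le> K" unfolding unb_def by (meson not_less)
  then have "\<forall>m. \<tau> (p @ [m]) \<le> bet p" unfolding bet_def by (rule someI_ex)
  then show ?thesis by blast
qed

definition fs :: "nat list \<Rightarrow> nat list" where
  "fs p = p @ [bet p]"

lemma fs_pow_app: "\<exists>w. (fs ^^ j) p = p @ w"
  by (induction j) (auto simp: fs_def)

lemma forced_ends: "\<exists>j. unb ((fs ^^ j) p)"
proof (rule ccontr)
  assume "\<not> (\<exists>j. unb ((fs ^^ j) p))"
  then have nu: "\<And>j. \<not> unb ((fs ^^ j) p)" by blast
  define m where "m i = (if i < length p then p ! i else bet ((fs ^^ (i - length p)) p))" for i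
  have C: "map m [0..<length p + j] = (fs ^^ j) p" for j
  proof (induction j)
    case 0
    show ?case by (rule nth_equalityI) (auto simp: m_def)
  next
    case (Suc j)
    have "map m [0..<length p + Suc j] = map m [0..<length p + j] @ [m (length p + j)]" by simp
    also have "\<dots> = (fs ^^ j) p @ [bet ((fs ^^ j) p)]"
    proof -
      have "m (length p + j) = bet ((fs ^^ j) p)" by (simp add: m_def)
      then show ?thesis using Suc.IH by simp
    qed
    also have "\<dots> = (fs ^^ Suc j) p" by (simp add: fs_def)
    finally show ?case .
  qed
  have "{k. m k < \<tau> (map m [0..<Suc k])} \<subseteq> {..<length p}"
  proof
    fix k assume k: "k \<in> {k. m k < \<tau> (map m [0..<Suc k])}"
    show "k \<in> {..<length p}"
    proof (rule ccontr)
      assume "k \<notin> {..<length p}"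
      then obtain j where j: "k = length p + j" by (metis lessThan_iff le_Suc_ex not_less)
      have "map m [0..<Suc k] = (fs ^^ Suc j) p" using C[of "Suc j"] j by simp
      also have "\<dots> = (fs ^^ j) p @ [bet ((fs ^^ j) p)]" by (simp add: fs_def)
      finally have "\<tau> (map m [0..<Suc k]) \<le> bet ((fs ^^ j) p)" using bet_prop[OF nu[of j]] by simp
      moreover have "m k = bet ((fs ^^ j) p)" using j by (simp add: m_def)
      ultimately show False using k by simp
    qed
  qed
  then have "finite {k. m k < \<tau> (map m [0..<Suc k])}" using finite_subset by blast
  moreover have "infinite {k. m k < \<tau> (map m [0..<Suc k])}"
    using win unfolding G1_winning_II_def G1_II_wins_play_def by (simp add: INFM_iff_infinite)
  ultimately show False by blast
qed

definition go :: "nat list \<Rightarrow> nat list" where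
  "go p = (fs ^^ (LEAST j. unb ((fs ^^ j) p))) p"

lemma go_unb: "unb (go p)"
  unfolding go_def using forced_ends[of p] by (rule LeastI_ex)

lemma go_app: "\<exists>w. go p = p @ w"
  unfolding go_def by (rule fs_pow_app)

definition jmp :: "nat list \<Rightarrow> nat \<Rightarrow> nat list" where
  "jmp p K = p @ [SOME m. K < \<tau> (p @ [m])]"

lemma jmp_gt: "unb p \<Longrightarrow> K < \<tau> (jmp p K)"
  unfolding jmp_def unb_def by (rule someI_ex) blast

lemma Vs_jmp: "Vs (jmp p K) = Vs p \<union> {\<tau> (jmp p K)}"
  unfolding jmp_def by (rule Vs_snoc)

lemma jmp_ne: "jmp p K \<noteq> []" unfolding jmp_def by simp

lemma Vs_go: "Vs p \<subseteq> Vs (go p)"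
  using go_app[of p] Vs_app_sub by metis

definition inv :: "nat set \<Rightarrow> nat list \<Rightarrow> nat list \<Rightarrow> bool" where
  "inv V0 a b \<longleftrightarrow> a \<noteq> [] \<and> b \<noteq> [] \<and> Vs a \<inter> Vs b \<subseteq> V0 \<and>
     (\<forall>x\<in>Vs b. x \<noteq> \<tau> b \<longrightarrow> x < \<tau> a) \<and> (\<forall>x\<in>Vs (go a). x < \<tau> b)"

lemma jmp_facts:
  assumes "a' = jmp (go a) K"
  shows "K < \<tau> a'" "Vs a' = Vs (go a) \<union> {\<tau> a'}" "a' \<noteq> []" "Vs (go a) \<subseteq> Vs a'"
    "Vs a' \<subseteq> Vs (go a')" "\<tau> a' \<in> Vs (go a')"
proof -
  show "K < \<tau> a'" using jmp_gt[OF go_unb] assms by simp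
  show "Vs a' = Vs (go a) \<union> {\<tau> a'}" using Vs_jmp assms by simp
  show "a' \<noteq> []" using jmp_ne assms by simp
  then show "Vs (go a) \<subseteq> Vs a'" using Vs_jmp assms by auto
  show "Vs a' \<subseteq> Vs (go a')" by (rule Vs_go)
  then show "\<tau> a' \<in> Vs (go a')" using last_in_Vs[OF \<open>a' \<noteq> []\<close>] by blast
qed

lemma step_inv:
  assumes I: "inv V0 a b"
    and a': "a' = jmp (go a) (lastv (go a) + lastv (go b))"
    and b': "b' = jmp (go b) (lastv (go a') + lastv (go b))"
  shows "inv V0 a' b'"
proof -
  have ne: "a \<noteq> []" "b \<noteq> []" and I1: "Vs a \<inter> Vs b \<subseteq> V0"
    and I3: "\<And>x. x \<in> Vs b \<Longrightarrow> x \<noteq> \<tau> b \<Longrightarrow> x < \<tau> a"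
    and I4: "\<And>x. x \<in> Vs (go a) \<Longrightarrow> x < \<tau> b"
    using I unfolding inv_def by auto
  note A = jmp_facts[OF a'] and B = jmp_facts[OF b']
  have ga_lt: "x < \<tau> a'" if "x \<in> Vs (go a)" for x
    using Vs_max[OF that] A(1) by simp
  have gb_ltA: "x < \<tau> a'" if "x \<in> Vs (go b)" for x
    using Vs_max[OF that] A(1) by simp
  have goa'_lt: "x < \<tau> b'" if "x \<in> Vs (go a')" for x
    using Vs_max[OF that] B(1) by simp
  have AB: "\<tau> a' < \<tau> b'" using goa'_lt A(6) by blast
  obtain wa where wa: "go a = a @ wa" using go_app by blast
  obtain wb where wb: "go b = b @ wb" using go_app by blast
  have ta: "\<tau> a \<in> Vs a" and tb: "\<tau> b \<in> Vs b" using last_in_Vs ne by auto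
  have NA: "\<tau> a < x" if "x \<in> Vs (go a)" "x \<notin> Vs a" for x
    using Vs_new[OF ta] that wa by metis
  have NB: "\<tau> b < x" if "x \<in> Vs (go b)" "x \<notin> Vs b" for x
    using Vs_new[OF tb] that wb by metis
  have VaGa: "Vs a \<subseteq> Vs (go a)" by (rule Vs_go)
  have I1': "Vs a' \<inter> Vs b' \<subseteq> V0"
  proof
    fix x assume x: "x \<in> Vs a' \<inter> Vs b'"
    show "x \<in> V0"
    proof (cases "x = \<tau> a'")
      case True
      then have "x \<in> Vs (go b) \<or> x = \<tau> b'" using x B(2) by blast
      then show ?thesis using gb_ltA AB True by auto
    next
      case False
      then have xga: "x \<in> Vs (go a)" using x A(2) by blast
      then have "x \<noteq> \<tau> b'" using goa'_lt A(4) A(5) by blast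
      then have xgb: "x \<in> Vs (go b)" using x B(2) by blast
      have xlt: "x < \<tau> b" using I4 xga .
      show ?thesis
      proof (cases "x \<in> Vs a")
        case xa: True
        show ?thesis
        proof (cases "x \<in> Vs b")
          case True then show ?thesis using I1 xa by blast
        next
          case False then show ?thesis using NB[OF xgb] xlt by simp
        qed
      next
        case xa: False
        show ?thesis
        proof (cases "x \<in> Vs b")
          case True
          then have "x < \<tau> a" using I3 xlt by simp
          then show ?thesis using NA[OF xga xa] by simp
        next
          case False then show ?thesis using NB[OF xgb] xlt by simp
        qed
      qed
    qed
  qed
  have I3': "\<forall>x\<in>Vs b'. x \<noteq> \<tau> b' \<longrightarrow> x < \<tau> a'"
    using B(2) gb_ltA by blast
  have I4': "\<forall>x\<in>Vs (go a'). x < \<tau> b'" using goa'_lt by blast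
  show ?thesis unfolding inv_def using A(3) B(3) I1' I3' I4' by blast
qed

lemma base_inv:
  assumes a': "a' = jmp (go []) (lastv (go []) + lastv (go []))"
    and b': "b' = jmp (go []) (lastv (go a') + lastv (go []))"
  shows "inv (Vs (go [])) a' b'"
proof -
  note A = jmp_facts[OF a'] and B = jmp_facts[OF b']
  have g_ltA: "x < \<tau> a'" if "x \<in> Vs (go [])" for x
    using Vs_max[OF that] A(1) by simp
  have goa'_lt: "x < \<tau> b'" if "x \<in> Vs (go a')" for x
    using Vs_max[OF that] B(1) by simp
  have AB: "\<tau> a' < \<tau> b'" using goa'_lt A(6) by blast
  have I1': "Vs a' \<inter> Vs b' \<subseteq> Vs (go [])"
  proof
    fix x assume x: "x \<in> Vs a' \<inter> Vs b'"
    show "x \<in> Vs (go [])"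
    proof (cases "x = \<tau> a'")
      case True
      then have "x \<in> Vs (go []) \<or> x = \<tau> b'" using x B(2) by blast
      then show ?thesis using g_ltA AB True by auto
    next
      case False
      then show ?thesis using x A(2) by blast
    qed
  qed
  have I3': "\<forall>x\<in>Vs b'. x \<noteq> \<tau> b' \<longrightarrow> x < \<tau> a'"
    using B(2) g_ltA by blast
  have I4': "\<forall>x\<in>Vs (go a'). x < \<tau> b'" using goa'_lt by blast
  show ?thesis unfolding inv_def using A(3) B(3) I1' I3' I4' by blast
qed

primrec PP :: "nat \<Rightarrow> nat list \<times> nat list" where
  "PP 0 = ([], [])"
| "PP (Suc r) = (let ga = go (fst (PP r)); gb = go (snd (PP r));
                     a' = jmp ga (lastv ga + lastv gb) in (a', jmp gb (lastv (go a') + lastv gb)))"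

lemma PP_inv: "0 < r \<Longrightarrow> inv (Vs (go [])) (fst (PP r)) (snd (PP r))"
proof (induction r)
  case 0 then show ?case by simp
next
  case (Suc r)
  show ?case
  proof (cases "r = 0")
    case True
    then show ?thesis by (simp add: Let_def base_inv)
  next
    case False
    then have "inv (Vs (go [])) (fst (PP r)) (snd (PP r))" using Suc by simp
    then show ?thesis by (simp add: Let_def step_inv)
  qed
qed

lemma PP_grow: "\<exists>w. fst (PP (Suc r)) = fst (PP r) @ w \<and> w \<noteq> []"
   "\<exists>w. snd (PP (Suc r)) = snd (PP r) @ w \<and> w \<noteq> []"
proof -
  obtain wa where wa: "go (fst (PP r)) = fst (PP r) @ wa" using go_app by blast
  obtain wb where wb: "go (snd (PP r)) = snd (PP r) @ wb" using go_app by blast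
  show "\<exists>w. fst (PP (Suc r)) = fst (PP r) @ w \<and> w \<noteq> []"
    using wa by (auto simp: Let_def jmp_def)
  show "\<exists>w. snd (PP (Suc r)) = snd (PP r) @ w \<and> w \<noteq> []"
    using wb by (auto simp: Let_def jmp_def)
qed

end

lemma chain_facts:
  fixes P :: "nat \<Rightarrow> 'a list"
  assumes g: "\<And>r. \<exists>w. P (Suc r) = P r @ w \<and> w \<noteq> []"
  shows chain_prefix: "r \<le> r' \<Longrightarrow> \<exists>w. P r' = P r @ w"
    and chain_len: "r \<le> length (P r)"
proof -
  show "r \<le> r' \<Longrightarrow> \<exists>w. P r' = P r @ w"
  proof (induction r' rule: dec_induct)
    case base then show ?case by simp
  next
    case (step n)
    then obtain w where "P n = P r @ w" by blast
    moreover obtain w' where "P (Suc n) = P n @ w'" using g by blast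
    ultimately show ?case by auto
  qed
  show "r \<le> length (P r)"
  proof (induction r)
    case 0 then show ?case by simp
  next
    case (Suc r)
    obtain w where "P (Suc r) = P r @ w" "w \<noteq> []" using g by blast
    then show ?case using Suc by (cases w) auto
  qed
qed

lemma chain_map:
  fixes P :: "nat \<Rightarrow> 'a list"
  assumes g: "\<And>r. \<exists>w. P (Suc r) = P r @ w \<and> w \<noteq> []"
    and k: "k \<le> length (P r)"
  shows "map (\<lambda>i. P (Suc i) ! i) [0..<k] = take k (P r)"
proof (rule nth_equalityI)
  show "length (map (\<lambda>i. P (Suc i) ! i) [0..<k]) = length (take k (P r))" using k by simp
next
  fix i assume "i < length (map (\<lambda>i. P (Suc i) ! i) [0..<k])"
  then have i: "i < k" by simp
  define R where "R = max r (Suc i)"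
  obtain w1 where w1: "P R = P r @ w1" using chain_prefix[of P, OF g, of r R] R_def by auto
  obtain w2 where w2: "P R = P (Suc i) @ w2" using chain_prefix[of P, OF g, of "Suc i" R] R_def by auto
  have l1: "i < length (P r)" using i k by simp
  have l2: "i < length (P (Suc i))" using chain_len[of P, OF g, of "Suc i"] by simp
  have "P (Suc i) ! i = P R ! i" using w2 l2 by (simp add: nth_append)
  also have "\<dots> = P r ! i" using w1 l1 by (simp add: nth_append)
  finally show "map (\<lambda>i. P (Suc i) ! i) [0..<k] ! i = take k (P r) ! i" using i by simp
qed


lemma no_II_wins_G1:
  assumes pf: "proper_filter F"
  shows "\<not> II_wins_G1 F"
proof
  assume "II_wins_G1 F"
  then obtain \<tau> where win: "G1_winning_II F \<tau>" unfolding II_wins_G1_def by blast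
  interpret IIG1 F \<tau> by (rule IIG1.intro[OF win])
  have filt: "is_filter F" and infF: "\<And>A. A \<in> F \<Longrightarrow> infinite A" using pf by (auto simp: proper_filter_def)
  define PA where "PA r = fst (PP r)" for r
  define PB where "PB r = snd (PP r)" for r
  have gA: "\<And>r. \<exists>w. PA (Suc r) = PA r @ w \<and> w \<noteq> []" unfolding PA_def by (rule PP_grow(1))
  have gB: "\<And>r. \<exists>w. PB (Suc r) = PB r @ w \<and> w \<noteq> []" unfolding PB_def by (rule PP_grow(2))
  define mA where "mA i = PA (Suc i) ! i" for i
  define mB where "mB i = PB (Suc i) ! i" for i
  have valA: "\<tau> (map mA [0..<Suc k]) \<in> Vs (PA (Suc k))" for k
  proof -
    have l: "Suc k \<le> length (PA (Suc k))" using chain_len[of PA, OF gA] .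
    have "map mA [0..<Suc k] = take (Suc k) (PA (Suc k))"
      unfolding mA_def using chain_map[of PA, OF gA l] .
    then have "\<tau> (map mA [0..<Suc k]) = \<tau> (take (Suc k) (PA (Suc k)))" by simp
    moreover have "k \<in> {..<length (PA (Suc k))}" using l by simp
    ultimately show ?thesis unfolding Vs_def by (rule image_eqI)
  qed
  have valB: "\<tau> (map mB [0..<Suc k]) \<in> Vs (PB (Suc k))" for k
  proof -
    have l: "Suc k \<le> length (PB (Suc k))" using chain_len[of PB, OF gB] .
    have "map mB [0..<Suc k] = take (Suc k) (PB (Suc k))"
      unfolding mB_def using chain_map[of PB, OF gB l] .
    then have "\<tau> (map mB [0..<Suc k]) = \<tau> (take (Suc k) (PB (Suc k)))" by simp
    moreover have "k \<in> {..<length (PB (Suc k))}" using l by simp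
    ultimately show ?thesis unfolding Vs_def by (rule image_eqI)
  qed
  have monoA: "Vs (PA r) \<subseteq> Vs (PA r')" if rr: "r \<le> r'" for r r'
  proof -
    obtain w where "PA r' = PA r @ w" using chain_prefix[of PA, OF gA rr] by blast
    then show ?thesis using Vs_app_sub by simp
  qed
  have monoB: "Vs (PB r) \<subseteq> Vs (PB r')" if rr: "r \<le> r'" for r r'
  proof -
    obtain w where "PB r' = PB r @ w" using chain_prefix[of PB, OF gB rr] by blast
    then show ?thesis using Vs_app_sub by simp
  qed
  define RA where "RA = range (\<lambda>k. \<tau> (map mA [0..<Suc k]))"
  define RB where "RB = range (\<lambda>k. \<tau> (map mB [0..<Suc k]))"
  have RAF: "RA \<in> F" using win[unfolded G1_winning_II_def G1_II_wins_play_def, rule_format, of mA] unfolding RA_def by blast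
  have RBF: "RB \<in> F" using win[unfolded G1_winning_II_def G1_II_wins_play_def, rule_format, of mB] unfolding RB_def by blast
  have "RA \<inter> RB \<subseteq> Vs (go [])"
  proof
    fix x assume "x \<in> RA \<inter> RB"
    then obtain k k' where k: "x = \<tau> (map mA [0..<Suc k])" "x = \<tau> (map mB [0..<Suc k'])"
      unfolding RA_def RB_def by blast
    define R where "R = max (Suc k) (Suc k')"
    have "x \<in> Vs (PA R)" using valA[of k] monoA[of "Suc k" R] k(1) R_def by auto
    moreover have "x \<in> Vs (PB R)" using valB[of k'] monoB[of "Suc k'" R] k(2) R_def by auto
    moreover have "inv (Vs (go [])) (PA R) (PB R)" unfolding PA_def PB_def by (rule PP_inv) (simp add: R_def)
    ultimately show "x \<in> Vs (go [])" unfolding inv_def by blast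
  qed
  then have "finite (RA \<inter> RB)" using finite_Vs finite_subset by blast
  moreover have "RA \<inter> RB \<in> F" using filter_Int[OF filt RAF RBF] .
  ultimately show False using infF by blast
qed

theorem theorem2p11:
  fixes F :: "nat set set"
  assumes "proper_filter F"
  shows "(I_wins_G1 F \<longleftrightarrow> I_wins_G Fr F)
       \<and> (II_wins_G1 F \<longleftrightarrow> II_wins_G Fr F)
       \<and> (I_wins_G1 F \<longleftrightarrow> meager_family F)
       \<and> (I_wins_G Fr F \<longleftrightarrow> meager_family F)
       \<and> \<not> II_wins_G1 F
       \<and> \<not> II_wins_G Fr F"
proof -
  have filt: "is_filter F" using assms by (simp add: proper_filter_def)
  have MG: "I_wins_G Fr F \<longleftrightarrow> meager_family F"
  proof
    assume "I_wins_G Fr F"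
    then obtain \<sigma> where "G_winning_I Fr F \<sigma>" unfolding I_wins_G_def by blast
    then show "meager_family F" using I_wins_G_part[OF assms] part_meager by blast
  next
    assume "meager_family F"
    then show "I_wins_G Fr F" using meager_part[OF filt] part_I_wins_G by blast
  qed
  have MG1: "I_wins_G1 F \<longleftrightarrow> meager_family F"
  proof
    assume "I_wins_G1 F"
    then obtain \<sigma> where "G1_winning_I F \<sigma>" unfolding I_wins_G1_def by blast
    then show "meager_family F" using I_wins_G1_part[OF assms] part_meager by blast
  next
    assume "meager_family F"
    then show "I_wins_G1 F" using meager_part[OF filt] part_I_wins_G1 by blast
  qed
  have N1: "\<not> II_wins_G1 F" by (rule no_II_wins_G1[OF assms])
  have N2: "\<not> II_wins_G Fr F" by (rule no_II_wins_G[OF assms])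
  show ?thesis using MG MG1 N1 N2 by blast
qed

end
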